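(* Let $a,b,q$ be parameters (complex numbers or indeterminates) such that no denominator below vanishes, let $c(n,a,b,q)=\frac{(b;q)_n}{(a;q)_n}$, and for integers $n\ge1$, $m\ge0$ let $$d(n,m,a,b,q)=\det\big(c(i+j+m,a,b,q)\big)_{i,j=0}^{n-1}.$$ Then $$d(n,0,a,b,q)=q^{2\binom{n}{3}}\prod_{k=1}^{n-1}\frac{(b;q)_k\,(q;q)_k\prod_{j=0}^{k-1}(b-q^ja)}{(q^{k-1}a;q)_k\,(a;q)_{2k}}$$ and $$d(n,m,a,b,q)=d(n,0,a,b,q)\,q^{m\binom{n}{2}}\prod_{j=0}^{m-1}\frac{(q^jb;q)_n}{(q^{n-1+j}a;q)_n}.$$
   Context: Notation: $(x;q)_n=\prod_{j=0}^{n-1}(1-q^jx)$, with $(x;q)_0=1$; empty products equal $1$. *)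

theory Defs
  imports Complex_Main "Jordan_Normal_Form.Determinant"
begin

definition qpoch :: "complex \<Rightarrow> complex \<Rightarrow> nat \<Rightarrow> complex" where
  "qpoch x q n = (\<Prod>j<n. 1 - q ^ j * x)"

definition cseq :: "nat \<Rightarrow> complex \<Rightarrow> complex \<Rightarrow> complex \<Rightarrow> complex" where
  "cseq n a b q = qpoch b q n / qpoch a q n"

definition dhank :: "nat \<Rightarrow> nat \<Rightarrow> complex \<Rightarrow> complex \<Rightarrow> complex \<Rightarrow> complex" where
  "dhank n m a b q = det (mat n n (\<lambda>(i, j). cseq (i + j + m) a b q))"

end

theory Submission
  imports Defs
begin


lemma qpoch_0[simp]: "qpoch x q 0 = 1" by (simp add: qpoch_def)
lemma qpoch_Suc: "qpoch x q (Suc n) = qpoch x q n * (1 - q^n * x)"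
  by (simp add: qpoch_def)
lemma qpoch_add: "qpoch x q (m + n) = qpoch x q m * qpoch (q^m * x) q n"
  by (induction n) (auto simp: qpoch_Suc power_add mult_ac)
lemma qpoch_Suc': "qpoch x q (Suc n) = (1 - x) * qpoch (q * x) q n"
  using qpoch_add[of x q 1 n] by (simp add: qpoch_def)

lemma qpoch_nz: "qpoch a q N \<noteq> 0 \<Longrightarrow> s + r \<le> N \<Longrightarrow> qpoch (q^s*a) q r \<noteq> 0"
proof -
  assume h: "qpoch a q N \<noteq> 0" and le: "s + r \<le> N"
  then obtain d where N: "N = (s + r) + d" by (metis le_add_diff_inverse)
  have "qpoch a q N = qpoch a q s * qpoch (q^s*a) q r * qpoch (q^(s+r)*a) q d"
    unfolding N qpoch_add by simp
  with h show ?thesis by auto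
qed

lemma qpoch_nz0: "qpoch a q N \<noteq> 0 \<Longrightarrow> r \<le> N \<Longrightarrow> qpoch a q r \<noteq> 0"
  using qpoch_nz[of a q N 0 r] by simp

lemma qpoch_fac: "qpoch a q N \<noteq> 0 \<Longrightarrow> t < N \<Longrightarrow> 1 - q^t*a \<noteq> 0"
  unfolding qpoch_def by auto

fun ww :: "complex \<Rightarrow> nat \<Rightarrow> nat \<Rightarrow> complex" where
  "ww q 0 j = (if j = 0 then 1 else 0)"
| "ww q (Suc k) j = (if j = 0 then 0 else ww q k (j - 1)) - q^k * ww q k j"

lemma ww_gt: "k < j \<Longrightarrow> ww q k j = 0"
  by (induction k arbitrary: j) auto

lemma ww_diag[simp]: "ww q k k = 1"
  by (induction k) (auto simp: ww_gt)

lemma ww_E: "(\<Sum>j\<le>k. ww q k j * z^j) = (\<Prod>t<k. z - q^t)"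
proof (induction k)
  case 0 thus ?case by simp
next
  case (Suc k)
  have "(\<Sum>j\<le>Suc k. ww q (Suc k) j * z^j) = (\<Sum>j\<le>Suc k. (if j = 0 then 0 else ww q k (j - 1)) * z^j) - q^k * (\<Sum>j\<le>Suc k. ww q k j * z^j)"
    by (simp add: algebra_simps sum_subtractf sum_distrib_left)
  also have "(\<Sum>j\<le>Suc k. (if j = 0 then 0 else ww q k (j - 1)) * z^j) = z * (\<Sum>j\<le>k. ww q k j * z^j)"
    by (subst sum.atMost_Suc_shift) (simp add: sum_distrib_left mult_ac)
  also have "(\<Sum>j\<le>Suc k. ww q k j * z^j) = (\<Sum>j\<le>k. ww q k j * z^j)"
    by (simp add: ww_gt)
  finally show ?case using Suc by (simp add: algebra_simps)
qed

lemma ww_E2: "(\<Sum>j\<le>k. ww q k j * q^(k-j) * z^j) = (\<Prod>t<k. z - q^(Suc t))"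
proof (induction k)
  case 0 thus ?case by simp
next
  case (Suc k)
  have "(\<Sum>j\<le>Suc k. ww q (Suc k) j * q^(Suc k - j) * z^j) = (\<Sum>j\<le>Suc k. (if j = 0 then 0 else ww q k (j - 1)) * q^(Suc k - j) * z^j) - q^k * (\<Sum>j\<le>Suc k. ww q k j * q^(Suc k - j) * z^j)"
    by (simp add: algebra_simps sum_subtractf sum_distrib_left)
  also have "(\<Sum>j\<le>Suc k. (if j = 0 then 0 else ww q k (j - 1)) * q^(Suc k - j) * z^j) = z * (\<Sum>j\<le>k. ww q k j * q^(k-j) * z^j)"
    by (subst sum.atMost_Suc_shift) (simp add: sum_distrib_left mult_ac)
  also have "(\<Sum>j\<le>Suc k. ww q k j * q^(Suc k - j) * z^j) = q * (\<Sum>j\<le>k. ww q k j * q^(k-j) * z^j)"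
    by (simp add: ww_gt sum_distrib_left Suc_diff_le mult_ac)
  finally show ?case using Suc by (simp add: algebra_simps)
qed

lemma ww_rec2: "ww q (Suc k) j = (if j = 0 then 0 else q^(Suc k - j) * ww q k (j - 1)) - q^(k - j) * ww q k j"
proof (cases "j \<le> Suc k")
  case False thus ?thesis by (simp add: ww_gt)
next
  case True
  define R where "R j = (if j = 0 then 0 else q^(Suc k - j) * ww q k (j - 1)) - q^(k - j) * ww q k j" for j
  have "\<forall>z. (\<Sum>j\<le>Suc k. ww q (Suc k) j * z^j) = (\<Sum>j\<le>Suc k. R j * z^j)"
  proof
    fix z
    have "(\<Sum>j\<le>Suc k. R j * z^j) = (\<Sum>j\<le>Suc k. (if j = 0 then 0 else q^(Suc k - j) * ww q k (j - 1)) * z^j) - (\<Sum>j\<le>Suc k. q^(k - j) * ww q k j * z^j)"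
      by (simp add: R_def algebra_simps sum_subtractf)
    also have "(\<Sum>j\<le>Suc k. (if j = 0 then 0 else q^(Suc k - j) * ww q k (j - 1)) * z^j) = z * (\<Sum>j\<le>k. ww q k j * q^(k-j) * z^j)"
      by (subst sum.atMost_Suc_shift) (simp add: sum_distrib_left mult_ac)
    also have "(\<Sum>j\<le>Suc k. q^(k - j) * ww q k j * z^j) = (\<Sum>j\<le>k. ww q k j * q^(k-j) * z^j)"
      by (simp add: ww_gt mult_ac)
    finally have "(\<Sum>j\<le>Suc k. R j * z^j) = z * (\<Sum>j\<le>k. ww q k j * q^(k-j) * z^j) - (\<Sum>j\<le>k. ww q k j * q^(k-j) * z^j)" .
    also have "\<dots> = (z - 1) * (\<Prod>t<k. z - q^(Suc t))"
      by (simp only: ww_E2) (simp add: algebra_simps)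
    also have "\<dots> = (\<Prod>t<Suc k. z - q^t)"
      by (simp only: prod.lessThan_Suc_shift) simp
    finally show "(\<Sum>j\<le>Suc k. ww q (Suc k) j * z^j) = (\<Sum>j\<le>Suc k. R j * z^j)"
      using ww_E[of q "Suc k" z] by metis
  qed
  then have "\<forall>i\<le>Suc k. ww q (Suc k) i = R i" by (simp only: polyfun_eq_coeffs)
  with True show ?thesis by (simp add: R_def)
qed

lemma ww_V: "m < k \<Longrightarrow> (\<Sum>j\<le>k. ww q k j * (q^j)^m) = 0"
proof -
  assume "m < k"
  have "(\<Sum>j\<le>k. ww q k j * (q^j)^m) = (\<Sum>j\<le>k. ww q k j * (q^m)^j)"
    by (simp add: power_mult[symmetric] mult.commute)
  also have "\<dots> = (\<Prod>t<k. q^m - q^t)" by (rule ww_E)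
  also have "\<dots> = 0" using \<open>m < k\<close> by (intro prod_zero) auto
  finally show ?thesis .
qed



fun pc :: "(nat \<Rightarrow> complex) \<Rightarrow> nat \<Rightarrow> nat \<Rightarrow> complex" where
  "pc \<beta> 0 m = (if m = 0 then 1 else 0)"
| "pc \<beta> (Suc n) m = pc \<beta> n m - \<beta> n * (if m = 0 then 0 else pc \<beta> n (m - 1))"

lemma pc_gt: "n < m \<Longrightarrow> pc \<beta> n m = 0"
  by (induction n arbitrary: m) auto

lemma pc_expand: "(\<Prod>s<n. 1 - \<beta> s * y) = (\<Sum>m\<le>n. pc \<beta> n m * y^m)"
proof (induction n)
  case 0 thus ?case by simp
next
  case (Suc n)
  have "(\<Sum>m\<le>Suc n. pc \<beta> (Suc n) m * y^m) = (\<Sum>m\<le>Suc n. pc \<beta> n m * y^m) - \<beta> n * (\<Sum>m\<le>Suc n. (if m = 0 then 0 else pc \<beta> n (m - 1)) * y^m)"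
    by (simp add: algebra_simps sum_subtractf sum_distrib_left)
  also have "(\<Sum>m\<le>Suc n. (if m = 0 then 0 else pc \<beta> n (m - 1)) * y^m) = y * (\<Sum>m\<le>n. pc \<beta> n m * y^m)"
    by (subst sum.atMost_Suc_shift) (simp add: sum_distrib_left mult_ac)
  also have "(\<Sum>m\<le>Suc n. pc \<beta> n m * y^m) = (\<Sum>m\<le>n. pc \<beta> n m * y^m)"
    by (simp add: pc_gt)
  finally show ?case using Suc by (simp add: algebra_simps)
qed

lemma pc_rev: "(\<Sum>m\<le>n. pc \<beta> n m * A^(n-m)) = (\<Prod>s<n. A - \<beta> s)"
proof (induction n)
  case 0 thus ?case by simp
next
  case (Suc n)
  have "(\<Sum>m\<le>Suc n. pc \<beta> (Suc n) m * A^(Suc n - m)) = (\<Sum>m\<le>Suc n. pc \<beta> n m * A^(Suc n - m)) - \<beta> n * (\<Sum>m\<le>Suc n. (if m = 0 then 0 else pc \<beta> n (m - 1)) * A^(Suc n - m))"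
    by (simp add: algebra_simps sum_subtractf sum_distrib_left)
  also have "(\<Sum>m\<le>Suc n. (if m = 0 then 0 else pc \<beta> n (m - 1)) * A^(Suc n - m)) = (\<Sum>m\<le>n. pc \<beta> n m * A^(n-m))"
    by (subst sum.atMost_Suc_shift) (simp add: sum_distrib_left mult_ac)
  also have "(\<Sum>m\<le>Suc n. pc \<beta> n m * A^(Suc n - m)) = A * (\<Sum>m\<le>n. pc \<beta> n m * A^(n-m))"
    by (simp add: pc_gt sum_distrib_left Suc_diff_le mult_ac)
  finally show ?case using Suc by (simp add: algebra_simps)
qed

lemma Vgen: "n < k \<Longrightarrow> (\<Sum>j\<le>k. ww q k j * (\<Prod>s<n. 1 - \<beta> s * q^j)) = 0"
proof -
  assume nk: "n < k"
  have "(\<Sum>j\<le>k. ww q k j * (\<Prod>s<n. 1 - \<beta> s * q^j)) = (\<Sum>j\<le>k. \<Sum>m\<le>n. pc \<beta> n m * (ww q k j * (q^j)^m))"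
    by (simp add: pc_expand sum_distrib_left mult_ac)
  also have "\<dots> = (\<Sum>m\<le>n. pc \<beta> n m * (\<Sum>j\<le>k. ww q k j * (q^j)^m))"
    by (subst sum.swap) (simp add: sum_distrib_left)
  also have "\<dots> = 0" using nk by (intro sum.neutral) (simp add: ww_V)
  finally show ?thesis .
qed

lemma choose2_Suc: "Suc k choose 2 = (k choose 2) + k"
  by (simp add: numeral_2_eq_2)

definition gam :: "complex \<Rightarrow> nat \<Rightarrow> complex" where
  "gam q k = (-1)^k * q^(k choose 2) * qpoch q q k"

lemma exp1: "i \<le> k \<Longrightarrow> (q::complex)^(k-i) * (q^(Suc i))^(Suc k) = q^(Suc (2*k)) * (q^i)^k"
proof -
  assume "i \<le> k"
  then obtain d where k: "k = i + d" by (metis le_add_diff_inverse)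
  have e: "k - i + Suc i * Suc k = Suc (2*k) + i*k" using k by (simp add: algebra_simps)
  show ?thesis by (simp only: power_mult[symmetric] power_add[symmetric] e)
qed

lemma exp2: "j \<le> k \<Longrightarrow> (q::complex)^(k-j) * (q^j)^(Suc k) = q^k * (q^j)^k"
proof -
  assume "j \<le> k"
  then obtain d where k: "k = j + d" by (metis le_add_diff_inverse)
  have e: "k - j + j * Suc k = k + j*k" using k by (simp add: algebra_simps)
  show ?thesis by (simp only: power_mult[symmetric] power_add[symmetric] e)
qed

lemma alg: "(D::complex) \<noteq> 0 \<Longrightarrow> D = U*P1 \<Longrightarrow> D = P2*V \<Longrightarrow>
   c*B*(g/P1) - c*(g/P2) = c*g*(B*U - V)/D"
proof -
  assume D: "D \<noteq> 0" and h1: "D = U*P1" and h2: "D = P2*V"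
  have e1: "g/P1 = g*U/D" using D h1 by auto
  have e2: "g/P2 = g*V/D" using D h2 by auto
  have "c*B*(g/P1) - c*(g/P2) = c*B*(g*U/D) - c*(g*V/D)" by (simp only: e1 e2)
  also have "\<dots> = c*g*(B*U - V)/D" by (simp add: diff_divide_distrib algebra_simps)
  finally show ?thesis .
qed

lemma G_top: "qpoch A q (Suc k) \<noteq> 0 \<Longrightarrow>
   (\<Sum>j\<le>k. ww q k j * (q^j)^k / (1 - q^j*A)) = gam q k / qpoch A q (Suc k)"
proof (induction k arbitrary: A)
  case 0 thus ?case by (simp add: gam_def qpoch_def numeral_2_eq_2)
next
  case (Suc k)
  have P: "qpoch A q (Suc (Suc k)) = (1 - A) * qpoch (q*A) q (Suc k)"
    by (rule qpoch_Suc')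
  have P2: "qpoch A q (Suc (Suc k)) = qpoch A q (Suc k) * (1 - q^(Suc k) * A)"
    by (rule qpoch_Suc)
  have nz1: "qpoch (q*A) q (Suc k) \<noteq> 0" and nzA: "1 - A \<noteq> 0" using Suc.prems P by auto
  have nz2: "qpoch A q (Suc k) \<noteq> 0" and nzB: "1 - q^(Suc k) * A \<noteq> 0" using Suc.prems P2 by auto
  have IH1: "(\<Sum>j\<le>k. ww q k j * (q^j)^k / (1 - q^j*(q*A))) = gam q k / qpoch (q*A) q (Suc k)"
    using Suc.IH[OF nz1] .
  have IH2: "(\<Sum>j\<le>k. ww q k j * (q^j)^k / (1 - q^j*A)) = gam q k / qpoch A q (Suc k)"
    using Suc.IH[OF nz2] .
  have S1: "(\<Sum>j\<le>Suc k. (if j = 0 then 0 else q^(Suc k - j) * ww q k (j - 1)) * (q^j)^(Suc k) / (1 - q^j*A))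
      = q^(Suc (2*k)) * (\<Sum>j\<le>k. ww q k j * (q^j)^k / (1 - q^j*(q*A)))"
    apply (subst sum.atMost_Suc_shift)
    apply (simp add: sum_distrib_left)
    apply (rule sum.cong, simp)
    subgoal for i
      using exp1[of i k q] by (auto simp: mult_ac)
    done
  have S2: "(\<Sum>j\<le>Suc k. q^(k - j) * ww q k j * (q^j)^(Suc k) / (1 - q^j*A))
      = q^k * (\<Sum>j\<le>k. ww q k j * (q^j)^k / (1 - q^j*A))"
    apply (simp add: ww_gt sum_distrib_left)
    apply (rule sum.cong, simp)
    subgoal for j
      using exp2[of j k q] by (auto simp: mult_ac)
    done
  have "(\<Sum>j\<le>Suc k. ww q (Suc k) j * (q^j)^(Suc k) / (1 - q^j*A))
     = (\<Sum>j\<le>Suc k. (if j = 0 then 0 else q^(Suc k - j) * ww q k (j - 1)) * (q^j)^(Suc k) / (1 - q^j*A))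
       - (\<Sum>j\<le>Suc k. q^(k - j) * ww q k j * (q^j)^(Suc k) / (1 - q^j*A))"
    unfolding ww_rec2 by (simp add: sum_subtractf diff_divide_distrib algebra_simps)
  also have "\<dots> = q^(Suc (2*k)) * (gam q k / qpoch (q*A) q (Suc k)) - q^k * (gam q k / qpoch A q (Suc k))"
    unfolding S1 S2 IH1 IH2 ..
  also have "\<dots> = gam q (Suc k) / qpoch A q (Suc (Suc k))"
  proof -
    have g: "gam q (Suc k) = - (q^k * gam q k * (1 - q^k * q))"
      by (simp add: gam_def qpoch_Suc power_add choose2_Suc algebra_simps)
    have "q^(Suc (2*k)) * (gam q k / qpoch (q*A) q (Suc k)) - q^k * (gam q k / qpoch A q (Suc k))
        = q^k * gam q k * (q^(Suc k) * (1 - A) - (1 - q^(Suc k) * A)) / qpoch A q (Suc (Suc k))"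
    proof -
      have qq: "q^(Suc (2*k)) = q^k * q^(Suc k)" by (simp add: power_add[symmetric] mult_2)
      have D: "qpoch A q (Suc (Suc k)) \<noteq> 0" using Suc.prems .
      show ?thesis unfolding qq by (rule alg[OF D P P2])
    qed
    also have "\<dots> = gam q (Suc k) / qpoch A q (Suc (Suc k))"
      unfolding g by (simp add: algebra_simps)
    finally show ?thesis .
  qed
  finally show ?case .
qed



lemma G_step: "m < k \<Longrightarrow> qpoch A q (Suc k) \<noteq> 0 \<Longrightarrow>
  (\<Sum>j\<le>k. ww q k j * (q^j)^m / (1 - q^j*A)) = A * (\<Sum>j\<le>k. ww q k j * (q^j)^(Suc m) / (1 - q^j*A))"
proof -
  assume mk: "m < k" and nz: "qpoch A q (Suc k) \<noteq> 0"
  have nzj: "1 - q^j*A \<noteq> 0" if "j \<le> k" for j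
    using qpoch_fac[OF nz, of j] that by simp
  have "(\<Sum>j\<le>k. ww q k j * (q^j)^m / (1 - q^j*A)) - A * (\<Sum>j\<le>k. ww q k j * (q^j)^(Suc m) / (1 - q^j*A))
      = (\<Sum>j\<le>k. ww q k j * (q^j)^m / (1 - q^j*A) - A * (ww q k j * (q^j)^(Suc m) / (1 - q^j*A)))"
    by (simp add: sum_subtractf sum_distrib_left)
  also have "\<dots> = (\<Sum>j\<le>k. ww q k j * (q^j)^m)"
  proof (rule sum.cong[OF refl])
    fix j assume "j \<in> {..k}"
    then have nzj': "1 - q^j*A \<noteq> 0" using nzj by simp
    show "ww q k j * (q^j)^m / (1 - q^j*A) - A * (ww q k j * (q^j)^(Suc m) / (1 - q^j*A)) = ww q k j * (q^j)^m"
    proof -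
      have "ww q k j * (q^j)^m / (1 - q^j*A) - A * (ww q k j * (q^j)^(Suc m) / (1 - q^j*A))
          = ww q k j * (q^j)^m * (1 - q^j*A) / (1 - q^j*A)"
        by (simp add: diff_divide_distrib algebra_simps)
      also have "\<dots> = ww q k j * (q^j)^m" using nzj' by simp
      finally show ?thesis .
    qed
  qed
  also have "\<dots> = 0" using ww_V[OF mk] .
  finally show ?thesis by simp
qed

lemma G_all: "m \<le> k \<Longrightarrow> qpoch A q (Suc k) \<noteq> 0 \<Longrightarrow>
   (\<Sum>j\<le>k. ww q k j * (q^j)^m / (1 - q^j*A)) = gam q k * A^(k-m) / qpoch A q (Suc k)"
proof -
  assume mk: "m \<le> k" and nz: "qpoch A q (Suc k) \<noteq> 0"
  have "\<forall>m. m + d = k \<longrightarrow> (\<Sum>j\<le>k. ww q k j * (q^j)^m / (1 - q^j*A)) = gam q k * A^(k-m) / qpoch A q (Suc k)" for d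
  proof (induction d)
    case 0 show ?case using G_top[OF nz] by simp
  next
    case (Suc d)
    show ?case
    proof (intro allI impI)
      fix m assume md: "m + Suc d = k"
      have "(\<Sum>j\<le>k. ww q k j * (q^j)^m / (1 - q^j*A)) = A * (\<Sum>j\<le>k. ww q k j * (q^j)^(Suc m) / (1 - q^j*A))"
        using md nz by (intro G_step) auto
      also have "\<dots> = A * (gam q k * A^(k - Suc m) / qpoch A q (Suc k))"
        using Suc.IH md by auto
      also have "\<dots> = gam q k * A^(k-m) / qpoch A q (Suc k)"
      proof -
        have "k - m = Suc (k - Suc m)" using md by simp
        then show ?thesis by simp
      qed
      finally show "(\<Sum>j\<le>k. ww q k j * (q^j)^m / (1 - q^j*A)) = gam q k * A^(k-m) / qpoch A q (Suc k)" .
    qed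
  qed
  then show ?thesis using mk by (metis le_add_diff_inverse)
qed

lemma Ggen: "qpoch A q (Suc k) \<noteq> 0 \<Longrightarrow>
  (\<Sum>j\<le>k. ww q k j * (\<Prod>s<k. 1 - \<beta> s * q^j) / (1 - q^j*A)) = gam q k * (\<Prod>s<k. A - \<beta> s) / qpoch A q (Suc k)"
proof -
  assume nz: "qpoch A q (Suc k) \<noteq> 0"
  have "(\<Sum>j\<le>k. ww q k j * (\<Prod>s<k. 1 - \<beta> s * q^j) / (1 - q^j*A))
     = (\<Sum>j\<le>k. \<Sum>m\<le>k. pc \<beta> k m * (ww q k j * (q^j)^m / (1 - q^j*A)))"
    by (simp add: pc_expand sum_distrib_left sum_divide_distrib mult_ac)
  also have "\<dots> = (\<Sum>m\<le>k. pc \<beta> k m * (\<Sum>j\<le>k. ww q k j * (q^j)^m / (1 - q^j*A)))"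
    by (subst sum.swap) (simp add: sum_distrib_left)
  also have "\<dots> = (\<Sum>m\<le>k. pc \<beta> k m * (gam q k * A^(k-m) / qpoch A q (Suc k)))"
    using nz by (intro sum.cong) (auto simp: G_all)
  also have "\<dots> = gam q k * (\<Sum>m\<le>k. pc \<beta> k m * A^(k-m)) / qpoch A q (Suc k)"
    by (simp add: sum_distrib_left sum_divide_distrib mult_ac)
  also have "\<dots> = gam q k * (\<Prod>s<k. A - \<beta> s) / qpoch A q (Suc k)"
    by (simp add: pc_rev)
  finally show ?thesis .
qed



definition al :: "complex \<Rightarrow> complex \<Rightarrow> complex \<Rightarrow> nat \<Rightarrow> nat \<Rightarrow> complex" where
  "al q a b k j = ww q k j * qpoch (q^j*b) q (k-j) / qpoch (q^(k-1+j)*a) q (k-j)"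

lemma prod_split: "(\<Prod>s<i+(r::nat). f s) = (\<Prod>s<i. f s) * (\<Prod>u<r. f (i+u))"
  by (induction r) (simp_all add: mult_ac)

lemma alg2: "(A1::complex) \<noteq> 0 \<Longrightarrow> A2 \<noteq> 0 \<Longrightarrow> A3 \<noteq> 0 \<Longrightarrow>
  w * B3 / A3 * ((B1*B2)/A1) = w * ((B1*B3)*(B2*A2)) / ((A1*A2)*A3)"
  by (simp add: field_simps)

lemma orth_term:
  assumes ik: "i < k" and jk: "j \<le> k" and nz: "qpoch a q (2*k-1) \<noteq> 0"
  shows "al q a b k j * cseq (i+j) a b q =
    ww q k j * (qpoch b q k * (\<Prod>s<k-1. 1 - (if s < i then q^s*b else q^s*a) * q^j)) / qpoch a q (2*k-1)"
proof -
  have hB1: "qpoch b q (i+j) = qpoch b q j * qpoch (q^j*b) q i"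
    using qpoch_add[of b q j i] by (simp add: add.commute)
  have hB2: "qpoch b q k = qpoch b q j * qpoch (q^j*b) q (k-j)"
    using qpoch_add[of b q j "k-j"] jk by simp
  have hA1: "qpoch a q (k-1+j) = qpoch a q (i+j) * qpoch (q^(i+j)*a) q (k-1-i)"
  proof -
    have e: "k-1+j = (i+j)+(k-1-i)" using ik by simp
    show ?thesis unfolding e by (rule qpoch_add)
  qed
  have hA2: "qpoch a q (2*k-1) = qpoch a q (k-1+j) * qpoch (q^(k-1+j)*a) q (k-j)"
  proof -
    have e: "2*k-1 = (k-1+j)+(k-j)" using ik jk by simp
    show ?thesis unfolding e by (rule qpoch_add)
  qed
  have hprod: "(\<Prod>s<k-1. 1 - (if s < i then q^s*b else q^s*a) * q^j)
     = qpoch (q^j*b) q i * qpoch (q^(i+j)*a) q (k-1-i)"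
  proof -
    have e: "i + (k-1-i) = k - 1" using ik by simp
    have "(\<Prod>s<i+(k-1-i). 1 - (if s < i then q^s*b else q^s*a) * q^j)
       = (\<Prod>s<i. 1 - (if s < i then q^s*b else q^s*a) * q^j) * (\<Prod>u<k-1-i. 1 - (if i+u < i then q^(i+u)*b else q^(i+u)*a) * q^j)"
      by (rule prod_split)
    then have "(\<Prod>s<k-1. 1 - (if s < i then q^s*b else q^s*a) * q^j)
       = (\<Prod>s<i. 1 - (if s < i then q^s*b else q^s*a) * q^j) * (\<Prod>u<k-1-i. 1 - (if i+u < i then q^(i+u)*b else q^(i+u)*a) * q^j)"
      by (simp only: e)
    also have "\<dots> = qpoch (q^j*b) q i * qpoch (q^(i+j)*a) q (k-1-i)"
      unfolding qpoch_def by (simp add: power_add mult_ac)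
    finally show ?thesis .
  qed
  have nz3: "qpoch a q (i+j) \<noteq> 0" "qpoch (q^(i+j)*a) q (k-1-i) \<noteq> 0" "qpoch (q^(k-1+j)*a) q (k-j) \<noteq> 0"
    using nz unfolding hA2 hA1 by auto
  show ?thesis
    unfolding al_def cseq_def hprod hB1 hB2 hA2 hA1
    by (rule alg2[OF nz3])
qed

lemma alg3: "(A0::complex) \<noteq> 0 \<Longrightarrow> F \<noteq> 0 \<Longrightarrow> A3 \<noteq> 0 \<Longrightarrow>
  w * B3 / A3 * ((B1*B2)/(A0*F)) = w * B2 / F * ((B1*B3)/(A0*A3))"
  by (simp add: field_simps)

lemma diag_term:
  assumes k1: "1 \<le> k" and jk: "j \<le> k" and nz: "qpoch a q (2*k) \<noteq> 0"
  shows "al q a b k j * cseq (k+j) a b q =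
    ww q k j * (\<Prod>s<k. 1 - (q^s*b) * q^j) / (1 - q^j*(q^(k-1)*a)) * (qpoch b q k / qpoch a q (2*k-1))"
proof -
  have hB1: "qpoch b q (k+j) = qpoch b q j * qpoch (q^j*b) q k"
    using qpoch_add[of b q j k] by (simp add: add.commute)
  have hB2: "qpoch b q k = qpoch b q j * qpoch (q^j*b) q (k-j)"
    using qpoch_add[of b q j "k-j"] jk by simp
  have hA1: "qpoch a q (k+j) = qpoch a q (k-1+j) * (1 - q^j*(q^(k-1)*a))"
  proof -
    have e: "k + j = Suc (k-1+j)" using k1 by simp
    have "qpoch a q (k+j) = qpoch a q (k-1+j) * (1 - q^(k-1+j)*a)" unfolding e by (rule qpoch_Suc)
    moreover have "q^(k-1+j)*a = q^j*(q^(k-1)*a)" by (simp add: power_add mult_ac)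
    ultimately show ?thesis by metis
  qed
  have hA2: "qpoch a q (2*k-1) = qpoch a q (k-1+j) * qpoch (q^(k-1+j)*a) q (k-j)"
  proof -
    have e: "2*k-1 = (k-1+j)+(k-j)" using k1 jk by simp
    show ?thesis unfolding e by (rule qpoch_add)
  qed
  have hprod: "(\<Prod>s<k. 1 - (q^s*b) * q^j) = qpoch (q^j*b) q k"
    unfolding qpoch_def by (simp add: mult_ac)
  have nz2: "qpoch a q (2*k-1) \<noteq> 0" using qpoch_nz0[OF nz, of "2*k-1"] by simp
  have nzF: "1 - q^j*(q^(k-1)*a) \<noteq> 0"
  proof -
    have "qpoch a q (k+j) \<noteq> 0" using qpoch_nz0[OF nz, of "k+j"] jk by simp
    then show ?thesis unfolding hA1 by simp
  qed
  have nz3: "qpoch a q (k-1+j) \<noteq> 0" "qpoch (q^(k-1+j)*a) q (k-j) \<noteq> 0"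
    using nz2 unfolding hA2 by auto
  show ?thesis
    unfolding al_def cseq_def hprod hB1 hA1 hA2 hB2
    by (rule alg3[OF nz3(1) nzF nz3(2)])
qed

lemma orth_sum:
  assumes ik: "i < k" and nz: "qpoch a q (2*k-1) \<noteq> 0"
  shows "(\<Sum>j\<le>k. al q a b k j * cseq (i+j) a b q) = 0"
proof -
  have "(\<Sum>j\<le>k. al q a b k j * cseq (i+j) a b q)
     = (\<Sum>j\<le>k. ww q k j * (qpoch b q k * (\<Prod>s<k-1. 1 - (if s < i then q^s*b else q^s*a) * q^j)) / qpoch a q (2*k-1))"
    using ik nz by (intro sum.cong) (auto simp: orth_term)
  also have "\<dots> = qpoch b q k / qpoch a q (2*k-1) * (\<Sum>j\<le>k. ww q k j * (\<Prod>s<k-1. 1 - (if s < i then q^s*b else q^s*a) * q^j))"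
    by (simp add: sum_distrib_left mult_ac)
  also have "\<dots> = 0" using ik by (simp add: Vgen)
  finally show ?thesis .
qed

lemma diag_sum:
  assumes k1: "1 \<le> k" and nz: "qpoch a q (2*k) \<noteq> 0"
  shows "(\<Sum>j\<le>k. al q a b k j * cseq (k+j) a b q) =
    gam q k * (\<Prod>s<k. q^(k-1)*a - q^s*b) / qpoch (q^(k-1)*a) q (Suc k) * (qpoch b q k / qpoch a q (2*k-1))"
proof -
  have nzA: "qpoch (q^(k-1)*a) q (Suc k) \<noteq> 0"
    using qpoch_nz[OF nz, of "k-1" "Suc k"] k1 by simp
  have "(\<Sum>j\<le>k. al q a b k j * cseq (k+j) a b q)
     = (\<Sum>j\<le>k. ww q k j * (\<Prod>s<k. 1 - (q^s*b) * q^j) / (1 - q^j*(q^(k-1)*a)) * (qpoch b q k / qpoch a q (2*k-1)))"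
    using k1 nz by (intro sum.cong) (auto simp: diag_term)
  also have "\<dots> = (\<Sum>j\<le>k. ww q k j * (\<Prod>s<k. 1 - (q^s*b) * q^j) / (1 - q^j*(q^(k-1)*a))) * (qpoch b q k / qpoch a q (2*k-1))"
    by (rule sum_distrib_right[symmetric])
  also have "\<dots> = gam q k * (\<Prod>s<k. q^(k-1)*a - q^s*b) / qpoch (q^(k-1)*a) q (Suc k) * (qpoch b q k / qpoch a q (2*k-1))"
    using Ggen[OF nzA, of "\<lambda>s. q^s*b"] by simp
  finally show ?thesis .
qed



lemma al_diag[simp]: "al q a b k k = 1"
  by (simp add: al_def)

lemma dhank0_prod:
  assumes n1: "n \<ge> 1" and nz: "qpoch a q (2*n-2) \<noteq> 0"
  shows "dhank n 0 a b q = (\<Prod>k<n. \<Sum>j\<le>k. al q a b k j * cseq (k+j) a b q)"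
proof -
  define H where "H = mat n n (\<lambda>(i,j). cseq (i+j+0) a b q)"
  define L where "L = mat n n (\<lambda>(k,j). if j \<le> k then al q a b k j else 0)"
  have H: "H \<in> carrier_mat n n" and L: "L \<in> carrier_mat n n" unfolding H_def L_def by auto
  have LH: "(L*H) $$ (k,i) = (\<Sum>j\<le>k. al q a b k j * cseq (i+j) a b q)" if "k<n" "i<n" for k i
  proof -
    have "(L*H) $$ (k,i) = (\<Sum>j\<in>{0..<n}. L $$ (k,j) * H $$ (j,i))"
      using that L H by (simp add: scalar_prod_def)
    also have "\<dots> = (\<Sum>j\<in>{0..<n}. if j \<le> k then al q a b k j * cseq (i+j) a b q else 0)"
      using that by (intro sum.cong) (auto simp: L_def H_def add.commute)
    also have "\<dots> = (\<Sum>j\<in>{x\<in>{0..<n}. x \<le> k}. al q a b k j * cseq (i+j) a b q)"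
      by (rule sum.inter_filter[symmetric]) simp
    also have "{x\<in>{0..<n}. x \<le> k} = {..k}" using that by auto
    finally show ?thesis .
  qed
  have detL: "det L = 1"
  proof -
    have "det L = prod_list (diag_mat L)"
      by (rule det_lower_triangular[OF _ L]) (auto simp: L_def)
    also have "\<dots> = 1" unfolding prod_list_diag_prod using L by (simp add: L_def)
    finally show ?thesis .
  qed
  have LHc: "L*H \<in> carrier_mat n n" using L H by auto
  have ut: "upper_triangular (L*H)"
    unfolding upper_triangular_def
  proof (intro allI impI)
    fix k i assume k: "k < dim_row (L*H)" and ik: "i < k"
    have kn: "k < n" using k L by auto
    have "qpoch a q (2*k-1) \<noteq> 0" using qpoch_nz0[OF nz, of "2*k-1"] kn by simp
    then show "(L*H) $$ (k,i) = 0"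
      using LH[OF kn, of i] ik kn orth_sum[OF ik] by simp
  qed
  have "det (L*H) = prod_list (diag_mat (L*H))" by (rule det_upper_triangular[OF ut LHc])
  also have "\<dots> = (\<Prod>k\<in>{0..<n}. (L*H) $$ (k,k))" unfolding prod_list_diag_prod using L by simp
  also have "\<dots> = (\<Prod>k<n. \<Sum>j\<le>k. al q a b k j * cseq (k+j) a b q)"
    using LH by (simp add: atLeast0LessThan)
  finally have "det (L*H) = (\<Prod>k<n. \<Sum>j\<le>k. al q a b k j * cseq (k+j) a b q)" .
  moreover have "det (L*H) = det H" using det_mult[OF L H] detL by simp
  moreover have "dhank n 0 a b q = det H" unfolding dhank_def H_def by simp
  ultimately show ?thesis by simp
qed



definition hh :: "complex \<Rightarrow> complex \<Rightarrow> complex \<Rightarrow> nat \<Rightarrow> complex" where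
  "hh q a b k = q^(2*(k choose 2)) * (qpoch b q k * qpoch q q k * (\<Prod>j<k. b - q ^ j * a) /
                (qpoch (q ^ (k - 1) * a) q k * qpoch a q (2 * k)))"

lemma prod_pow_choose: "(\<Prod>s<k. (q::complex)^s) = q^(k choose 2)"
  by (induction k) (simp_all add: choose2_Suc power_add numeral_2_eq_2)

lemma sign_lemma:
  "(-1)^k * q^(k choose 2) * (\<Prod>s<k. q^(k-1)*a - q^s*b) = q^(2*(k choose 2)) * (\<Prod>j<k. b - q^j*(a::complex))"
proof -
  have 1: "(\<Prod>s<k. q^(k-1)*a - q^s*b) = (\<Prod>s<k. (-1) * q^s * (b - q^(k - Suc s)*a))"
  proof (rule prod.cong[OF refl])
    fix s assume "s \<in> {..<k}"
    then have "k - 1 = s + (k - Suc s)" by auto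
    then have "q^(k-1) = q^s * q^(k - Suc s)" by (simp add: power_add)
    then show "q^(k-1)*a - q^s*b = (-1) * q^s * (b - q^(k - Suc s)*a)" by (simp add: algebra_simps)
  qed
  have 2: "(\<Prod>s<k. (-1) * q^s * (b - q^(k - Suc s)*a)) = (-1)^k * (\<Prod>s<k. q^s) * (\<Prod>s<k. b - q^(k - Suc s)*a)"
    by (simp only: prod.distrib prod_constant card_lessThan)
  have 3: "(\<Prod>s<k. b - q^(k - Suc s)*a) = (\<Prod>j<k. b - q^j*a)"
    by (rule prod.nat_diff_reindex)
  have "(-1)^k * q^(k choose 2) * (\<Prod>s<k. q^(k-1)*a - q^s*b)
      = ((-1)^k * (-1)^k) * (q^(k choose 2) * q^(k choose 2)) * (\<Prod>j<k. b - q^j*a)"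
    unfolding 1 2 3 prod_pow_choose by (simp add: mult_ac)
  also have "\<dots> = q^(2*(k choose 2)) * (\<Prod>j<k. b - q^j*a)"
    by (simp add: power_add[symmetric] mult_2 power_mult_distrib[symmetric])
  finally show ?thesis .
qed

lemma hk_val:
  assumes k1: "1 \<le> k" and nz: "qpoch a q (2*k) \<noteq> 0"
  shows "(\<Sum>j\<le>k. al q a b k j * cseq (k+j) a b q) = hh q a b k"
proof -
  have Q1: "qpoch (q^(k-1)*a) q (Suc k) = qpoch (q^(k-1)*a) q k * (1 - q^(2*k-1)*a)"
  proof -
    have "q^k * (q^(k-1)*a) = q^(2*k-1)*a"
    proof -
      have "2*k-1 = k + (k-1)" using k1 by simp
      then show ?thesis by (simp add: power_add)
    qed
    then show ?thesis by (simp add: qpoch_Suc)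
  qed
  have Q2: "qpoch a q (2*k) = qpoch a q (2*k-1) * (1 - q^(2*k-1)*a)"
  proof -
    have "2*k = Suc (2*k-1)" using k1 by simp
    then show ?thesis by (metis qpoch_Suc)
  qed
  have "(\<Sum>j\<le>k. al q a b k j * cseq (k+j) a b q) =
    gam q k * (\<Prod>s<k. q^(k-1)*a - q^s*b) / qpoch (q^(k-1)*a) q (Suc k) * (qpoch b q k / qpoch a q (2*k-1))"
    by (rule diag_sum[OF k1 nz])
  also have "\<dots> = qpoch q q k * ((-1)^k * q^(k choose 2) * (\<Prod>s<k. q^(k-1)*a - q^s*b)) * qpoch b q k
        / (qpoch (q^(k-1)*a) q k * (qpoch a q (2*k-1) * (1 - q^(2*k-1)*a)))"
    unfolding Q1 gam_def by (simp add: mult_ac)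
  also have "\<dots> = hh q a b k"
    unfolding sign_lemma hh_def Q2[symmetric] by (simp add: mult_ac)
  finally show ?thesis .
qed

lemma part1_hh:
  assumes n1: "n \<ge> 1" and nz: "qpoch a q (2*n-2) \<noteq> 0"
  shows "dhank n 0 a b q = (\<Prod>k\<in>{1..n-1}. hh q a b k)"
proof -
  have U: "{..<n} = insert 0 {1..n-1}" using n1 by auto
  have "dhank n 0 a b q = (\<Prod>k<n. \<Sum>j\<le>k. al q a b k j * cseq (k+j) a b q)"
    by (rule dhank0_prod[OF n1 nz])
  also have "\<dots> = (\<Prod>k\<in>{1..n-1}. \<Sum>j\<le>k. al q a b k j * cseq (k+j) a b q)"
    unfolding U by (simp add: cseq_def)
  also have "\<dots> = (\<Prod>k\<in>{1..n-1}. hh q a b k)"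
  proof (rule prod.cong[OF refl])
    fix k assume k: "k \<in> {1..n-1}"
    have le: "2*k \<le> 2*n-2" using k by auto
    have "qpoch a q (2*k) \<noteq> 0" using qpoch_nz0[OF nz le] .
    then show "(\<Sum>j\<le>k. al q a b k j * cseq (k+j) a b q) = hh q a b k"
      using hk_val k by auto
  qed
  finally show ?thesis .
qed

lemma part1:
  assumes n1: "n \<ge> 1" and nz: "qpoch a q (2*n-2) \<noteq> 0"
  shows "dhank n 0 a b q = q ^ (2 * (n choose 3)) *
             (\<Prod>k = 1..n - 1.
                qpoch b q k * qpoch q q k * (\<Prod>j<k. b - q ^ j * a) /
                (qpoch (q ^ (k - 1) * a) q k * qpoch a q (2 * k)))"
proof -
  have "dhank n 0 a b q = (\<Prod>k\<in>{1..n-1}. hh q a b k)"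
    by (rule part1_hh[OF n1 nz])
  also have "\<dots> = (\<Prod>k\<in>{1..n-1}. q^(2*(k choose 2))) *
             (\<Prod>k = 1..n - 1.
                qpoch b q k * qpoch q q k * (\<Prod>j<k. b - q ^ j * a) /
                (qpoch (q ^ (k - 1) * a) q k * qpoch a q (2 * k)))"
    unfolding hh_def by (rule prod.distrib)
  also have "(\<Prod>k\<in>{1..n-1}. q^(2*(k choose 2))) = q^(2 * (n choose 3))"
  proof -
    have "(\<Sum>k\<in>{1..n-1}. k choose 2) = (\<Sum>k\<le>n-1. k choose 2)"
    proof -
      have "{..n-1} = insert 0 {1..n-1}" by auto
      then show ?thesis by (simp add: numeral_2_eq_2)
    qed
    also have "\<dots> = Suc (n-1) choose Suc 2" by (rule sum_choose_upper)
    also have "\<dots> = n choose 3" using n1 by (simp add: numeral_3_eq_3 numeral_2_eq_2)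
    finally have s: "(\<Sum>k\<in>{1..n-1}. k choose 2) = n choose 3" .
    have "(\<Prod>k\<in>{1..n-1}. q^(2*(k choose 2))) = q^(\<Sum>k\<in>{1..n-1}. 2*(k choose 2))"
      by (simp add: power_sum)
    also have "(\<Sum>k\<in>{1..n-1}. 2*(k choose 2)) = 2 * (n choose 3)"
      using s by (simp add: sum_distrib_left[symmetric])
    finally show ?thesis .
  qed
  finally show ?thesis .
qed



lemma cseq_shift: "cseq (k+m) a b q = cseq m a b q * cseq k (q^m*a) (q^m*b) q"
  by (simp add: cseq_def add.commute[of k m] qpoch_add)

lemma dhank_shift: "dhank n m a b q = cseq m a b q ^ n * dhank n 0 (q^m*a) (q^m*b) q"
proof -
  have "mat n n (\<lambda>(i,j). cseq (i+j+m) a b q) = cseq m a b q \<cdot>\<^sub>m mat n n (\<lambda>(i,j). cseq (i+j+0) (q^m*a) (q^m*b) q)"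
    by (rule eq_matI) (auto simp: cseq_shift)
  then show ?thesis unfolding dhank_def by simp
qed

lemma dhank_Suc: "dhank n (Suc m) a b q = cseq 1 a b q ^ n * dhank n m (q*a) (q*b) q"
proof -
  have c: "cseq (Suc m) a b q = cseq 1 a b q * cseq m (q*a) (q*b) q"
    using cseq_shift[of m 1 a b q] by simp
  have e: "q^m*(q*a) = q^(Suc m)*a" "q^m*(q*b) = q^(Suc m)*b" by (simp_all add: mult_ac)
  show ?thesis
    unfolding dhank_shift[of n "Suc m"] dhank_shift[of n m "q*a"] c e
    by (simp add: power_mult_distrib mult_ac)
qed

lemma alg5:
  fixes \<alpha> u X Y X' Y' Z :: complex
  assumes nz: "\<alpha>\<noteq>0" "u\<noteq>0" "X\<noteq>0" "Y\<noteq>0" "X'\<noteq>0" "Y'\<noteq>0" "Z\<noteq>0"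
   and r1: "\<beta>1 * b' = Bn * \<beta>2" and r2: "P' = t*P" and r3: "u*X' = X*v" and r4: "\<alpha>*Y' = Y*w"
   and r5: "u*Z = X*v*w"
  shows "\<beta>1/\<alpha> * (K*(b'*Qq*P'/(X'*Y'))) * (L*Bn/X) = K*(Bn*Qq*P/(X*Y)) * (L*t*Bn*\<beta>2/Z)"
proof -
  have vw: "v \<noteq> 0" "w \<noteq> 0" using r5 nz by auto
  have X': "X' = X*v/u" using r3 nz by (simp add: field_simps)
  have Y': "Y' = Y*w/\<alpha>" using r4 nz by (simp add: field_simps)
  have Z: "Z = X*v*w/u" using r5 nz by (simp add: field_simps)
  define M where "M = K*Qq*t*P*L*Bn*u/(X*X*Y*v*w)"
  have "\<beta>1/\<alpha> * (K*(b'*Qq*P'/(X'*Y'))) * (L*Bn/X) = (\<beta>1*b') * M"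
    unfolding M_def X' Y' r2 using nz vw by (simp add: field_simps)
  moreover have "K*(Bn*Qq*P/(X*Y)) * (L*t*Bn*\<beta>2/Z) = (Bn*\<beta>2) * M"
    unfolding M_def Z using nz vw by (simp add: field_simps)
  ultimately show ?thesis using r1 by simp
qed

lemma step_id:
  assumes n1: "n \<ge> 1" and nz: "qpoch a q (2*n+1) \<noteq> 0"
  shows "cseq 1 a b q * hh q (q*a) (q*b) n * (q^(n choose 2) * qpoch b q n / qpoch (q^(n-1)*a) q n)
       = hh q a b n * (q^((n choose 2) + n) * qpoch b q n * (1 - q^n*b) / qpoch (q^n*a) q (Suc n))"
proof -
  define X where "X = qpoch (q^(n-1)*a) q n"
  define Y where "Y = qpoch a q (2*n)"
  define X' where "X' = qpoch (q^(n-1)*(q*a)) q n"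
  define Y' where "Y' = qpoch (q*a) q (2*n)"
  define Z where "Z = qpoch (q^n*a) q (Suc n)"
  define P where "P = (\<Prod>j<n. b - q^j*a)"
  define P' where "P' = (\<Prod>j<n. q*b - q^j*(q*a))"
  define b' where "b' = qpoch (q*b) q n"
  have c1: "cseq 1 a b q = (1-b)/(1-a)" by (simp add: cseq_def qpoch_def)
  have hh1: "hh q (q*a) (q*b) n = q^(2*(n choose 2)) * (b' * qpoch q q n * P' / (X' * Y'))"
    unfolding hh_def b'_def P'_def X'_def Y'_def by simp
  have hh2: "hh q a b n = q^(2*(n choose 2)) * (qpoch b q n * qpoch q q n * P / (X * Y))"
    unfolding hh_def P_def X_def Y_def by simp
  have r1: "(1-b) * b' = qpoch b q n * (1 - q^n*b)"
    unfolding b'_def using qpoch_Suc'[of b q n] qpoch_Suc[of b q n] by simp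
  have r2: "P' = q^n * P"
  proof -
    have "P' = (\<Prod>j<n. q * (b - q^j*a))" unfolding P'_def by (simp add: algebra_simps)
    also have "\<dots> = q^n * P" unfolding P_def by (simp add: prod.distrib)
    finally show ?thesis .
  qed
  have e1: "q * (q^(n-1)*a) = q^(n-1)*(q*a)" by (simp add: mult_ac)
  have e2: "q^n * (q^(n-1)*a) = q^(2*n-1)*a"
  proof -
    have "2*n-1 = n + (n-1)" using n1 by simp
    then show ?thesis by (simp add: power_add)
  qed
  have e3: "q^(Suc n) * (q^(n-1)*a) = q^(2*n)*a"
  proof -
    have "2*n = Suc n + (n-1)" using n1 by simp
    then have "q^(2*n) = q^(Suc n) * q^(n-1)" by (metis power_add)
    then show ?thesis by (metis mult.assoc)
  qed
  have e4: "q * (q^(n-1)*a) = q^n*a"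
  proof -
    have "n = Suc (n-1)" using n1 by simp
    then have "q^n = q * q^(n-1)" by (metis power_Suc)
    then show ?thesis by (simp add: mult_ac)
  qed
  have r3: "(1 - q^(n-1)*a) * X' = X * (1 - q^(2*n-1)*a)"
    using qpoch_Suc'[of "q^(n-1)*a" q n] qpoch_Suc[of "q^(n-1)*a" q n]
    unfolding X'_def X_def e1 e2 by simp
  have r4: "(1-a) * Y' = Y * (1 - q^(2*n)*a)"
    using qpoch_Suc'[of a q "2*n"] qpoch_Suc[of a q "2*n"] unfolding Y'_def Y_def by simp
  have r5: "(1 - q^(n-1)*a) * Z = X * (1 - q^(2*n-1)*a) * (1 - q^(2*n)*a)"
  proof -
    have "qpoch (q^(n-1)*a) q (Suc (Suc n)) = (1 - q^(n-1)*a) * Z"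
      unfolding Z_def qpoch_Suc'[of "q^(n-1)*a" q "Suc n"] e4 ..
    moreover have "qpoch (q^(n-1)*a) q (Suc (Suc n)) = X * (1 - q^(2*n-1)*a) * (1 - q^(2*n)*a)"
      unfolding X_def qpoch_Suc e2 e3 ..
    ultimately show ?thesis by simp
  qed
  have nzQ: "qpoch (q^(n-1)*a) q (Suc (Suc n)) \<noteq> 0"
    using qpoch_nz[OF nz, of "n-1" "Suc (Suc n)"] n1 by simp
  have nzu: "1 - q^(n-1)*a \<noteq> 0" and nzZ: "Z \<noteq> 0"
    using nzQ unfolding Z_def qpoch_Suc'[of "q^(n-1)*a" q "Suc n"] e4 by auto
  have nzX: "X \<noteq> 0" using nzQ unfolding X_def qpoch_Suc by auto
  have nzY: "Y \<noteq> 0" unfolding Y_def using qpoch_nz0[OF nz, of "2*n"] by simp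
  have nzS: "qpoch a q (Suc (2*n)) \<noteq> 0" using nz by simp
  have nza: "1 - a \<noteq> 0" and nzY': "Y' \<noteq> 0"
    using nzS unfolding Y'_def qpoch_Suc'[of a q "2*n"] by auto
  have nzX': "X' \<noteq> 0"
  proof
    assume "X' = 0"
    then have "X * (1 - q^(2*n-1)*a) = 0" using r3 by simp
    moreover have "1 - q^(2*n-1)*a \<noteq> 0" using qpoch_fac[OF nz, of "2*n-1"] n1 by simp
    ultimately show False using nzX by simp
  qed
  have "cseq 1 a b q * hh q (q*a) (q*b) n * (q^(n choose 2) * qpoch b q n / X)
       = hh q a b n * (q^(n choose 2) * q^n * qpoch b q n * (1 - q^n*b) / Z)"
    unfolding c1 hh1 hh2
    by (rule alg5[OF nza nzu nzX nzY nzX' nzY' nzZ r1 r2 r3 r4 r5])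
  then show ?thesis unfolding X_def Z_def by (simp add: power_add mult_ac)
qed



lemma m1: "1 \<le> n \<Longrightarrow> qpoch a q (2*n-1) \<noteq> 0 \<Longrightarrow>
  cseq 1 a b q ^ n * (\<Prod>k\<in>{1..n-1}. hh q (q*a) (q*b) k)
  = (\<Prod>k\<in>{1..n-1}. hh q a b k) * (q^(n choose 2) * qpoch b q n / qpoch (q^(n-1)*a) q n)"
proof (induction n rule: nat_induct_at_least)
  case base
  then show ?case by (simp add: cseq_def numeral_2_eq_2)
next
  case (Suc n)
  have n1: "1 \<le> n" by fact
  have nz': "qpoch a q (2*n+1) \<noteq> 0" using Suc.prems by simp
  have nz'': "qpoch a q (2*n-1) \<noteq> 0" using qpoch_nz0[OF nz', of "2*n-1"] by simp
  have U: "{1..Suc n - 1} = insert n {1..n-1}" and nin: "n \<notin> {1..n-1}" using n1 by auto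
  define c where "c = cseq 1 a b q"
  define R where "R = q^(n choose 2) * qpoch b q n / qpoch (q^(n-1)*a) q n"
  define PA where "PA = (\<Prod>k\<in>{1..n-1}. hh q a b k)"
  define PB where "PB = (\<Prod>k\<in>{1..n-1}. hh q (q*a) (q*b) k)"
  have IH: "c^n * PB = PA * R" unfolding c_def PB_def PA_def R_def using Suc.IH[OF nz''] .
  have st: "c * hh q (q*a) (q*b) n * R = hh q a b n * (q^((n choose 2) + n) * qpoch b q n * (1 - q^n*b) / qpoch (q^n*a) q (Suc n))"
    unfolding c_def R_def by (rule step_id[OF n1 nz'])
  have RS: "q^(Suc n choose 2) * qpoch b q (Suc n) / qpoch (q^(Suc n-1)*a) q (Suc n)
      = q^((n choose 2) + n) * qpoch b q n * (1 - q^n*b) / qpoch (q^n*a) q (Suc n)"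
    by (simp add: choose2_Suc qpoch_Suc[of b q n] del: qpoch_Suc)
  have "cseq 1 a b q ^ Suc n * (\<Prod>k\<in>{1..Suc n-1}. hh q (q*a) (q*b) k)
      = (c * hh q (q*a) (q*b) n) * (c^n * PB)"
    unfolding U c_def PB_def using nin by (simp add: mult_ac)
  also have "\<dots> = PA * (c * hh q (q*a) (q*b) n * R)" unfolding IH by (simp add: mult_ac)
  also have "\<dots> = (\<Prod>k\<in>{1..Suc n-1}. hh q a b k) * (q^(Suc n choose 2) * qpoch b q (Suc n) / qpoch (q^(Suc n-1)*a) q (Suc n))"
    unfolding st RS U PA_def using nin by (simp add: mult_ac)
  finally show ?case .
qed

lemma dhank1: "1 \<le> n \<Longrightarrow> qpoch a q (2*n-1) \<noteq> 0 \<Longrightarrow>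
  dhank n 1 a b q = dhank n 0 a b q * (q^(n choose 2) * qpoch b q n / qpoch (q^(n-1)*a) q n)"
proof -
  assume n1: "1 \<le> n" and nz: "qpoch a q (2*n-1) \<noteq> 0"
  have nz0: "qpoch a q (2*n-2) \<noteq> 0" using qpoch_nz0[OF nz, of "2*n-2"] by simp
  have nzq: "qpoch (q*a) q (2*n-2) \<noteq> 0"
  proof -
    have "2*n-1 = Suc (2*n-2)" using n1 by simp
    then have "qpoch a q (2*n-1) = (1-a) * qpoch (q*a) q (2*n-2)" by (metis qpoch_Suc')
    then show ?thesis using nz by auto
  qed
  have "dhank n 1 a b q = cseq 1 a b q ^ n * dhank n 0 (q*a) (q*b) q"
    using dhank_Suc[of n 0 a b q] by simp
  also have "\<dots> = cseq 1 a b q ^ n * (\<Prod>k\<in>{1..n-1}. hh q (q*a) (q*b) k)"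
    using part1_hh[OF n1 nzq] by simp
  also have "\<dots> = (\<Prod>k\<in>{1..n-1}. hh q a b k) * (q^(n choose 2) * qpoch b q n / qpoch (q^(n-1)*a) q n)"
    by (rule m1[OF n1 nz])
  also have "\<dots> = dhank n 0 a b q * (q^(n choose 2) * qpoch b q n / qpoch (q^(n-1)*a) q n)"
    using part1_hh[OF n1 nz0] by simp
  finally show ?thesis .
qed

lemma part2: "1 \<le> n \<Longrightarrow> qpoch a q (2 * n - 2 + m) \<noteq> 0 \<Longrightarrow>
           dhank n m a b q =
             dhank n 0 a b q * q ^ (m * (n choose 2)) *
             (\<Prod>j<m. qpoch (q ^ j * b) q n / qpoch (q ^ (n - 1 + j) * a) q n)"
proof (induction m arbitrary: a b)
  case 0 then show ?case by simp
next
  case (Suc m)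
  have n1: "1 \<le> n" by fact
  have nz: "qpoch a q (2*n-2 + Suc m) \<noteq> 0" by fact
  have nzq: "qpoch (q*a) q (2*n-2+m) \<noteq> 0"
  proof -
    have "qpoch a q (2*n-2 + Suc m) = (1-a) * qpoch (q*a) q (2*n-2+m)"
      by (simp add: qpoch_Suc' del: qpoch_Suc)
    then show ?thesis using nz by auto
  qed
  have nz1: "qpoch a q (2*n-1) \<noteq> 0" using qpoch_nz0[OF nz, of "2*n-1"] n1 by simp
  define f where "f j = qpoch (q ^ j * b) q n / qpoch (q ^ (n - 1 + j) * a) q n" for j
  have "dhank n (Suc m) a b q = cseq 1 a b q ^ n * dhank n m (q*a) (q*b) q"
    by (rule dhank_Suc)
  also have "\<dots> = cseq 1 a b q ^ n * (dhank n 0 (q*a) (q*b) q * q ^ (m * (n choose 2)) *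
             (\<Prod>j<m. qpoch (q ^ j * (q*b)) q n / qpoch (q ^ (n - 1 + j) * (q*a)) q n))"
    using Suc.IH[OF n1 nzq] by simp
  also have "(\<Prod>j<m. qpoch (q ^ j * (q*b)) q n / qpoch (q ^ (n - 1 + j) * (q*a)) q n) = (\<Prod>j<m. f (Suc j))"
  proof (rule prod.cong[OF refl])
    fix j
    have e: "q ^ j * (q*b) = q^(Suc j) * b" "q ^ (n - 1 + j) * (q*a) = q^(n-1+Suc j)*a"
      by (simp_all add: mult_ac)
    show "qpoch (q ^ j * (q*b)) q n / qpoch (q ^ (n - 1 + j) * (q*a)) q n = f (Suc j)"
      by (simp only: f_def e)
  qed
  also have "cseq 1 a b q ^ n * (dhank n 0 (q*a) (q*b) q * q ^ (m * (n choose 2)) * (\<Prod>j<m. f (Suc j)))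
     = dhank n 1 a b q * q ^ (m * (n choose 2)) * (\<Prod>j<m. f (Suc j))"
    using dhank_Suc[of n 0 a b q] by (simp add: mult_ac)
  also have "\<dots> = dhank n 0 a b q * (q^(n choose 2) * f 0) * q ^ (m * (n choose 2)) * (\<Prod>j<m. f (Suc j))"
    unfolding dhank1[OF n1 nz1] f_def by (simp add: mult_ac)
  also have "\<dots> = dhank n 0 a b q * q ^ (Suc m * (n choose 2)) * (\<Prod>j<Suc m. f j)"
    by (simp add: prod.lessThan_Suc_shift power_add mult_ac del: prod.lessThan_Suc)
  finally show ?case unfolding f_def .
qed

theorem theorem2:
  fixes a b q :: complex and n m :: nat
  assumes "n \<ge> 1"
  shows "(qpoch a q (2 * n - 2) \<noteq> 0 \<longrightarrow>
           dhank n 0 a b q =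
             q ^ (2 * (n choose 3)) *
             (\<Prod>k = 1..n - 1.
                qpoch b q k * qpoch q q k * (\<Prod>j<k. b - q ^ j * a) /
                (qpoch (q ^ (k - 1) * a) q k * qpoch a q (2 * k))))
       \<and> (qpoch a q (2 * n - 2 + m) \<noteq> 0 \<longrightarrow>
           dhank n m a b q =
             dhank n 0 a b q * q ^ (m * (n choose 2)) *
             (\<Prod>j<m. qpoch (q ^ j * b) q n / qpoch (q ^ (n - 1 + j) * a) q n))"
  using part1[OF assms] part2[OF assms] by blast


end
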